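(* Let $n,d\ge1$. For $k\ge1$ let $\mathbf M_k\in\mathbb R^{n\times n}$ be invertible; for $k\ge0$ let $\mathbf H_k\in\mathbb R^{d\times n}$, $\mathbf R_k$ symmetric positive definite, ${\boldsymbol\Omega}_k=\mathbf H_k^{\mathrm T}\mathbf R_k^{-1}\mathbf H_k$. Let $\mathbf M_{k:0}=\mathbf M_k\cdots\mathbf M_1$, let $\mathbf P_0$ be symmetric positive semi-definite with largest eigenvalue $\sigma_1^0$, and $\mathbf P_{k+1}=\mathbf M_{k+1}(\mathbf I_n+\mathbf P_k{\boldsymbol\Omega}_k)^{-1}\mathbf P_k\mathbf M_{k+1}^{\mathrm T}$ for $k\ge0$. For $k\ge1$ let $\mathbf M_{k:0}=\mathbf U_{k:0}{\boldsymbol\Sigma}_{k:0}\mathbf V_{k:0}^{\mathrm T}$ be a singular value decomposition with $\mathbf U_{k:0}=[{\mathbf u}_1^{k:0},\ldots,{\mathbf u}_n^{k:0}]$, $\mathbf V_{k:0}=[{\mathbf v}_1^{k:0},\ldots,{\mathbf v}_n^{k:0}]$ orthogonal and $[{\boldsymbol\Sigma}_{k:0}]_{ii}=\exp(\lambda_i^k k)$ with $\lambda_1^k\ge\cdots\ge\lambda_n^k$. For $1\le s\le n$ let $\mathbf V^s_{k:0}=[{\mathbf v}^{k:0}_{n-s+1},\ldots,{\mathbf v}^{k:0}_n]$, let ${\mathcal S}^s_{k:0}=\mathrm{span}\{{\mathbf u}^{k:0}_{n-s+1},\ldots,{\mathbf u}^{k:0}_n\}$, and $$\alpha_s=\sup_{k\ge1}\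 \max_{{\mathbf h}\in\mathrm{Im}(\mathbf V^s_{k:0}),\ \|{\mathbf h}\|=1}{\mathbf h}^{\mathrm T}\mathbf P_0{\mathbf h}.$$ Then $\alpha_s\le\sigma_1^0$ for all $s$, and for every $k\ge1$, every $1\le s\le n$ and every unit vector ${\mathbf h}\in{\mathcal S}^s_{k:0}$, $${\mathbf h}^{\mathrm T}\mathbf P_k{\mathbf h}\le\alpha_s\exp\big(2\lambda^k_{n-s+1}k\big).$$ Consequently, if $\sigma_1^k\ge\cdots\ge\sigma_n^k$ are the eigenvalues of $\mathbf P_k$, then $\sigma_i^k\le\alpha_{n-i+1}\exp(2\lambda_i^k k)\le\sigma_1^0\exp(2\lambda_i^kk)$ for $i=1,\ldots,n$. Moreover, suppose that for each $i$ the limit $\lambda_i=\lim_{k\to\infty}\lambda_i^k$ exists and that $\lambda_1>\cdots>\lambda_n$. Then for every $i$ with $\lambda_i<0$, $({\mathbf u}^{k:0}_i)^{\mathrm T}\mathbf P_k{\mathbf u}^{k:0}_i\to0$ as $k\to\infty$; and if in addition the sequence $\{\mathbf P_k\}$ is uniformly bounded, then $\|\mathbf P_k{\mathbf u}^{k:0}_i\|\to0$ as $k\to\infty$ for every such $i$.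
   Context: $\|\cdot\|$ is the Euclidean norm. The $\lambda_i$ are the Lyapunov exponents of the dynamics $\mathbf M_{k:0}$; the left singular vectors ${\mathbf u}_i^{k:0}$ approximate the backward Lyapunov vectors at time $t_k$. *)

theory Defs
  imports "HOL-Analysis.Analysis" "HOL-Computational_Algebra.Polynomial"
begin

fun Mprod :: "(nat \<Rightarrow> real^'n^'n) \<Rightarrow> nat \<Rightarrow> real^'n^'n" where
  "Mprod M 0 = mat 1"
| "Mprod M (Suc k) = M (Suc k) ** Mprod M k"

definition outer :: "real^'n \<Rightarrow> real^'m \<Rightarrow> real^'m^'n" where
  "outer x y = (\<chi> i j. x $ i * y $ j)"

definition symmetric_mat :: "real^'n^'n \<Rightarrow> bool" where
  "symmetric_mat A \<longleftrightarrow> transpose A = A"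

definition pos_def :: "real^'n^'n \<Rightarrow> bool" where
  "pos_def A \<longleftrightarrow> symmetric_mat A \<and> (\<forall>x. x \<noteq> 0 \<longrightarrow> x \<bullet> (A *v x) > 0)"

definition pos_semidef :: "real^'n^'n \<Rightarrow> bool" where
  "pos_semidef A \<longleftrightarrow> symmetric_mat A \<and> (\<forall>x. x \<bullet> (A *v x) \<ge> 0)"

definition is_eigenvalue :: "real^'n^'n \<Rightarrow> real \<Rightarrow> bool" where
  "is_eigenvalue A c \<longleftrightarrow> (\<exists>v. v \<noteq> 0 \<and> A *v v = c *\<^sub>R v)"

definition largest_eigenvalue :: "real^'n^'n \<Rightarrow> real" where
  "largest_eigenvalue A = Max {c. is_eigenvalue A c}"

definition charpoly :: "real^'n^'n \<Rightarrow> real poly" where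
  "charpoly A = det (\<chi> i j. (if i = j then [:0, 1:] else 0) - [:A $ i $ j:])"

definition orthonormal_fam :: "nat \<Rightarrow> (nat \<Rightarrow> real^'n) \<Rightarrow> bool" where
  "orthonormal_fam n w \<longleftrightarrow>
     (\<forall>i\<in>{1..n}. \<forall>j\<in>{1..n}. w i \<bullet> w j = (if i = j then 1 else 0))"

end

theory Submission
  imports Defs
begin


lemma inner_transpose_mv: "x \<bullet> (A *v y) = (transpose A *v x) \<bullet> (y::real^'n)"
  by (metis dot_lmul_matrix transpose_matrix_vector)

lemma sym_form: "symmetric_mat A \<Longrightarrow> x \<bullet> (A *v y) = y \<bullet> (A *v (x::real^'n))"
  unfolding symmetric_mat_def by (metis inner_commute inner_transpose_mv)

lemma quad_disc:
  fixes a b c :: real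
  assumes "\<And>t. 0 \<le> a + 2*b*t + c*t^2"
  shows "b^2 \<le> a*c"
proof (cases "c = 0")
  case True
  have "b = 0"
  proof (rule ccontr)
    assume "b \<noteq> 0"
    have "0 \<le> a + 2*b*(-(a+1)/(2*b)) + c*(-(a+1)/(2*b))^2" by (rule assms)
    with True \<open>b\<noteq>0\<close> show False by (simp add: field_simps)
  qed
  then show ?thesis using True assms[of 0] by simp
next
  case False
  have c0: "c \<ge> 0"
  proof (rule ccontr)
    assume "\<not> c \<ge> 0"
    then have cn: "c < 0" by simp
    have a0: "a \<ge> 0" using assms[of 0] by simp
    define t where "t = sqrt ((a+1)/(-c))"
    have tt: "t^2 = (a+1)/(-c)" unfolding t_def using a0 cn by (simp add: divide_nonneg_neg)
    have "0 \<le> a + 2*b*t + c*t^2" "0 \<le> a + 2*b*(-t) + c*(-t)^2" by (rule assms)+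
    then have "0 \<le> 2*a + 2*c*t^2" by simp
    also have "\<dots> = -2" using tt cn by (simp add: field_simps)
    finally show False by simp
  qed
  with False have cp: "c > 0" by simp
  have "0 \<le> a + 2*b*(-b/c) + c*(-b/c)^2" by (rule assms)
  then have "0 \<le> a - b^2/c" using cp by (simp add: field_simps power2_eq_square)
  then show ?thesis using cp by (simp add: field_simps)
qed

lemma form_expand:
  assumes "symmetric_mat A"
  shows "(x + t *\<^sub>R y) \<bullet> (A *v (x + t *\<^sub>R y)) =
     x \<bullet> (A *v x) + 2 * (y \<bullet> (A *v x)) * t + (y \<bullet> (A *v y)) * t^2"
proof -
  have "x \<bullet> (A *v y) = y \<bullet> (A *v x)" using sym_form[OF assms, of x y] .
  then show ?thesis
    by (simp add: matrix_vector_right_distrib matrix_vector_mult_scaleR inner_add_left inner_add_right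
        power2_eq_square algebra_simps)
qed

lemma sym_CS:
  assumes "symmetric_mat A" "\<And>t. 0 \<le> (x + t *\<^sub>R y) \<bullet> (A *v (x + t *\<^sub>R y))"
  shows "(y \<bullet> (A *v x))^2 \<le> (x \<bullet> (A *v x)) * (y \<bullet> (A *v (y::real^'n)))"
  using assms(2) unfolding form_expand[OF assms(1)] by (rule quad_disc)

lemma psd_CS:
  assumes "pos_semidef A"
  shows "(y \<bullet> (A *v x))^2 \<le> (x \<bullet> (A *v x)) * (y \<bullet> (A *v (y::real^'n)))"
  using assms unfolding pos_semidef_def by (intro sym_CS) auto

lemma psd_zero:
  assumes "pos_semidef A" "x \<bullet> (A *v x) = 0"
  shows "A *v x = (0::real^'n)"
proof -
  have "((A *v x) \<bullet> (A *v x))^2 \<le> (x \<bullet> (A *v x)) * ((A *v x) \<bullet> (A *v (A *v x)))"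
    by (rule psd_CS[OF assms(1)])
  then have "((A *v x) \<bullet> (A *v x))^2 \<le> 0" using assms(2) by simp
  then show ?thesis by simp
qed

lemma matrix_inv_props:
  fixes A :: "real^'n^'n"
  assumes "invertible A"
  shows "A ** matrix_inv A = mat 1" "matrix_inv A ** A = mat 1"
  using someI_ex[OF assms[unfolded invertible_def]] unfolding matrix_inv_def by auto

lemma inj_invertible:
  fixes A :: "real^'n^'n"
  assumes "\<And>x. A *v x = 0 \<Longrightarrow> x = 0"
  shows "invertible A"
  using assms invertible_left_inverse matrix_left_invertible_ker by blast

lemma transpose_add: "transpose (A + B) = transpose A + transpose (B::real^'n^'m)"
  by (simp add: transpose_def vec_eq_iff)

lemma matrix_add_rdistrib': "((B + C) ** A) = (B ** A) + (C ** (A::real^'p^'n))"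
  by (vector matrix_matrix_mult_def sum.distrib[symmetric] field_simps)

lemma kalman_step:
  fixes P W :: "real^'n^'n"
  assumes P: "pos_semidef P" and W: "pos_semidef W"
  defines "X \<equiv> matrix_inv (mat 1 + P ** W) ** P"
  shows "pos_semidef X \<and> (\<forall>x. x \<bullet> (X *v x) \<le> x \<bullet> (P *v x))"
proof -
  let ?N = "mat 1 + P ** W"
  have Ps: "transpose P = P" and Ws: "transpose W = W"
    using P W unfolding pos_semidef_def symmetric_mat_def by auto
  have invN: "invertible ?N"
  proof (rule inj_invertible)
    fix z assume "?N *v z = 0"
    then have z: "z = - (P *v (W *v z))"
      by (simp add: matrix_vector_mul_assoc[symmetric] matrix_vector_mult_add_rdistrib eq_neg_iff_add_eq_0)
    have "z \<bullet> (W *v z) = - ((W *v z) \<bullet> (P *v (W *v z)))"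
      by (subst z) (simp add: inner_commute)
    moreover have "(W *v z) \<bullet> (P *v (W *v z)) \<ge> 0" "z \<bullet> (W *v z) \<ge> 0"
      using P W unfolding pos_semidef_def by auto
    ultimately have "z \<bullet> (W *v z) = 0" by linarith
    then have "W *v z = 0" using psd_zero[OF W] by simp
    then show "z = 0" using z by simp
  qed
  define Ni where "Ni = matrix_inv ?N"
  have N1: "?N ** Ni = mat 1" and N2: "Ni ** ?N = mat 1"
    using matrix_inv_props[OF invN] unfolding Ni_def by auto
  have X: "X = Ni ** P" unfolding X_def Ni_def ..
  have tN: "transpose ?N = mat 1 + W ** P"
    by (simp add: transpose_add matrix_transpose_mul Ps Ws)
  have comm: "?N ** P = P ** transpose ?N"
    by (simp add: tN matrix_add_ldistrib matrix_add_rdistrib' matrix_mul_assoc)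
  have tN2: "transpose ?N ** transpose Ni = mat 1"
    using N2 by (metis matrix_transpose_mul transpose_mat)
  have XT: "X = P ** transpose Ni"
  proof -
    have "Ni ** P = Ni ** P ** (transpose ?N ** transpose Ni)" by (simp add: tN2)
    also have "\<dots> = Ni ** (P ** transpose ?N) ** transpose Ni" by (simp add: matrix_mul_assoc)
    also have "\<dots> = Ni ** (?N ** P) ** transpose Ni" by (simp add: comm)
    also have "\<dots> = (Ni ** ?N) ** P ** transpose Ni" by (simp add: matrix_mul_assoc)
    finally show ?thesis using N2 X by simp
  qed
  have Xsym: "transpose X = X"
    using XT X by (simp add: matrix_transpose_mul Ps)
  have NX: "?N ** X = P" using N1 X by (metis matrix_mul_assoc matrix_mul_lid)
  have Xpsd: "x \<bullet> (X *v x) \<ge> 0" for x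
  proof -
    define z where "z = transpose Ni *v x"
    have Xx: "X *v x = P *v z" unfolding z_def XT by (metis matrix_vector_mul_assoc)
    have xz: "x = z + W *v (P *v z)"
    proof -
      have "x = (transpose ?N ** transpose Ni) *v x" by (simp add: tN2)
      also have "\<dots> = transpose ?N *v z" by (metis z_def matrix_vector_mul_assoc)
      finally show ?thesis by (simp add: tN matrix_vector_mult_add_rdistrib matrix_vector_mul_assoc)
    qed
    have "x \<bullet> (X *v x) = z \<bullet> (P *v z) + (P *v z) \<bullet> (W *v (P *v z))"
      unfolding Xx by (subst (1) xz) (simp add: inner_add_left inner_add_right inner_commute)
    moreover have "z \<bullet> (P *v z) \<ge> 0" "(P *v z) \<bullet> (W *v (P *v z)) \<ge> 0"
      using P W unfolding pos_semidef_def by auto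
    ultimately show ?thesis by simp
  qed
  have Xle: "x \<bullet> (X *v x) \<le> x \<bullet> (P *v x)" for x
  proof -
    have PX: "P *v x = X *v x + P *v (W *v (X *v x))"
      using arg_cong[OF NX, of "\<lambda>M. M *v x"]
      by (simp add: matrix_vector_mult_add_rdistrib matrix_vector_mul_assoc[symmetric])
    have "x \<bullet> (P *v x) - x \<bullet> (X *v x) = x \<bullet> (P *v (W *v (X *v x)))"
      using PX by (simp add: inner_add_right)
    also have "\<dots> = (P *v x) \<bullet> (W *v (X *v x))"
      by (simp add: inner_transpose_mv Ps)
    also have "\<dots> = (X *v x) \<bullet> (W *v (X *v x)) + (W *v (X *v x)) \<bullet> (P *v (W *v (X *v x)))"
      by (subst PX) (simp add: inner_add_left inner_add_right inner_commute)
    also have "\<dots> \<ge> 0" using P W unfolding pos_semidef_def by (simp add: add_nonneg_nonneg)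
    finally show ?thesis by simp
  qed
  show ?thesis using Xsym Xpsd Xle unfolding pos_semidef_def symmetric_mat_def by auto
qed

lemma Omega_psd:
  fixes R :: "real^'d^'d" and H :: "real^'n^'d"
  assumes R: "pos_def R"
  shows "pos_semidef (transpose H ** matrix_inv R ** H)"
proof -
  have Rs: "transpose R = R" using R unfolding pos_def_def symmetric_mat_def by auto
  have invR: "invertible R"
  proof (rule inj_invertible)
    fix x assume "R *v x = 0"
    then have "x \<bullet> (R *v x) = 0" by simp
    then show "x = 0" using R unfolding pos_def_def by force
  qed
  define Ri where "Ri = matrix_inv R"
  have R1: "R ** Ri = mat 1" and R2: "Ri ** R = mat 1"
    using matrix_inv_props[OF invR] unfolding Ri_def by auto
  have "transpose Ri ** R = mat 1"
    using R1 by (metis matrix_transpose_mul transpose_mat Rs)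
  then have Ris: "transpose Ri = Ri"
    by (metis R1 matrix_mul_assoc matrix_mul_lid matrix_mul_rid)
  have Rip: "x \<bullet> (Ri *v x) \<ge> 0" for x
  proof -
    define y where "y = Ri *v x"
    have x: "x = R *v y" unfolding y_def using R1 by (metis matrix_vector_mul_assoc matrix_vector_mul_lid)
    have "x \<bullet> (Ri *v x) = y \<bullet> (R *v y)" unfolding y_def[symmetric] by (simp add: x inner_commute)
    moreover have "y \<bullet> (R *v y) \<ge> 0"
      using R unfolding pos_def_def by (cases "y = 0") (auto intro: less_imp_le)
    ultimately show ?thesis by simp
  qed
  have sym: "transpose (transpose H ** Ri ** H) = transpose H ** Ri ** H"
    by (simp add: matrix_transpose_mul Ris matrix_mul_assoc)
  have "x \<bullet> ((transpose H ** Ri ** H) *v x) = (H *v x) \<bullet> (Ri *v (H *v x))" for x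
    by (metis inner_transpose_mv matrix_vector_mul_assoc transpose_transpose)
  then show ?thesis using sym Rip unfolding pos_semidef_def symmetric_mat_def Ri_def by auto
qed

lemma P_bound:
  fixes M :: "nat \<Rightarrow> real^'n^'n" and P W :: "nat \<Rightarrow> real^'n^'n"
  assumes P0: "pos_semidef (P 0)" and W: "\<And>k. pos_semidef (W k)"
    and rec: "\<And>k. P (Suc k) = M (Suc k) ** matrix_inv (mat 1 + P k ** W k) ** P k ** transpose (M (Suc k))"
  shows "pos_semidef (P k) \<and> (\<forall>h. h \<bullet> (P k *v h) \<le>
           (transpose (Mprod M k) *v h) \<bullet> (P 0 *v (transpose (Mprod M k) *v h)))"
proof (induction k)
  case 0
  then show ?case using P0 by (simp del: transpose_matrix_vector)
next
  case (Suc k)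
  define X where "X = matrix_inv (mat 1 + P k ** W k) ** P k"
  have KX: "pos_semidef X \<and> (\<forall>x. x \<bullet> (X *v x) \<le> x \<bullet> (P k *v x))"
    unfolding X_def using kalman_step Suc.IH W by blast
  have PS: "P (Suc k) = M (Suc k) ** X ** transpose (M (Suc k))"
    unfolding rec X_def by (simp add: matrix_mul_assoc)
  have quad: "h \<bullet> (P (Suc k) *v h) = (transpose (M (Suc k)) *v h) \<bullet> (X *v (transpose (M (Suc k)) *v h))" for h
    unfolding PS by (metis inner_transpose_mv matrix_vector_mul_assoc)
  have Xs: "transpose X = X" using KX unfolding pos_semidef_def symmetric_mat_def by auto
  have sym: "transpose (P (Suc k)) = P (Suc k)"
    unfolding PS by (simp add: matrix_transpose_mul Xs matrix_mul_assoc)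
  have psd: "pos_semidef (P (Suc k))"
    unfolding pos_semidef_def symmetric_mat_def using sym quad KX unfolding pos_semidef_def by auto
  have "h \<bullet> (P (Suc k) *v h) \<le> (transpose (Mprod M (Suc k)) *v h) \<bullet> (P 0 *v (transpose (Mprod M (Suc k)) *v h))" for h
  proof -
    let ?g = "transpose (M (Suc k)) *v h"
    have T: "transpose (Mprod M (Suc k)) *v h = transpose (Mprod M k) *v ?g"
      by (simp only: Mprod.simps matrix_transpose_mul matrix_vector_mul_assoc)
    have "h \<bullet> (P (Suc k) *v h) \<le> ?g \<bullet> (P k *v ?g)" using quad KX by auto
    also have "\<dots> \<le> (transpose (Mprod M k) *v ?g) \<bullet> (P 0 *v (transpose (Mprod M k) *v ?g))"
      using Suc.IH by blast
    finally show ?thesis unfolding T .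
  qed
  then show ?case using psd by blast
qed

definition onf :: "nat set \<Rightarrow> (nat \<Rightarrow> real^'n) \<Rightarrow> bool" where
  "onf I e \<longleftrightarrow> (\<forall>i\<in>I. \<forall>j\<in>I. e i \<bullet> e j = (if i = j then 1 else 0))"

lemma onf_subset: "onf J e \<Longrightarrow> I \<subseteq> J \<Longrightarrow> onf I e"
  unfolding onf_def by blast

lemma onf_comb_inner:
  assumes "finite I" "onf I e" "i \<in> I"
  shows "(\<Sum>j\<in>I. c j *\<^sub>R e j) \<bullet> e i = c i"
proof -
  have "(\<Sum>j\<in>I. c j *\<^sub>R e j) \<bullet> e i = (\<Sum>j\<in>I. c j * (if j = i then 1 else 0))"
    using assms unfolding onf_def by (simp add: inner_sum_left)
  also have "\<dots> = c i" using assms by (simp add: if_distrib cong: if_cong)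
  finally show ?thesis .
qed

lemma onf_expand:
  assumes "finite I" "onf I e" "x \<in> span (e ` I)"
  shows "x = (\<Sum>j\<in>I. (x \<bullet> e j) *\<^sub>R e j)"
proof (rule span_induct[OF assms(3), where P="\<lambda>x. x = (\<Sum>j\<in>I. (x \<bullet> e j) *\<^sub>R e j)"])
  show "subspace {x. x = (\<Sum>j\<in>I. (x \<bullet> e j) *\<^sub>R e j)}" unfolding subspace_def
  proof (intro conjI ballI allI; simp only: mem_Collect_eq)
    show "0 = (\<Sum>j\<in>I. (0 \<bullet> e j) *\<^sub>R e j)" by simp
  next
    fix x y assume hx: "x = (\<Sum>j\<in>I. (x \<bullet> e j) *\<^sub>R e j)" and hy: "y = (\<Sum>j\<in>I. (y \<bullet> e j) *\<^sub>R e j)"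
    have "(\<Sum>j\<in>I. ((x + y) \<bullet> e j) *\<^sub>R e j) = (\<Sum>j\<in>I. (x \<bullet> e j) *\<^sub>R e j) + (\<Sum>j\<in>I. (y \<bullet> e j) *\<^sub>R e j)"
      by (simp add: inner_add_left scaleR_add_left sum.distrib)
    then show "x + y = (\<Sum>j\<in>I. ((x + y) \<bullet> e j) *\<^sub>R e j)"
      by (simp add: hx[symmetric] hy[symmetric])
  next
    fix c x assume hx: "x = (\<Sum>j\<in>I. (x \<bullet> e j) *\<^sub>R e j)"
    have "(\<Sum>j\<in>I. ((c *\<^sub>R x) \<bullet> e j) *\<^sub>R e j) = c *\<^sub>R (\<Sum>j\<in>I. (x \<bullet> e j) *\<^sub>R e j)"
      by (simp add: scaleR_sum_right)
    then show "c *\<^sub>R x = (\<Sum>j\<in>I. ((c *\<^sub>R x) \<bullet> e j) *\<^sub>R e j)"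
      by (simp add: hx[symmetric])
  qed
next
  fix x assume "x \<in> e ` I"
  then obtain i where i: "i \<in> I" "x = e i" by auto
  have "(\<Sum>j\<in>I. (e i \<bullet> e j) *\<^sub>R e j) = (\<Sum>j\<in>I. (if i = j then e j else 0))"
    using assms i unfolding onf_def by (intro sum.cong) auto
  also have "\<dots> = e i" using assms i by simp
  finally show "x = (\<Sum>j\<in>I. (x \<bullet> e j) *\<^sub>R e j)" using i by simp
qed

lemma onf_norm2:
  assumes "finite I" "onf I e"
  shows "norm (\<Sum>j\<in>I. c j *\<^sub>R e j)^2 = (\<Sum>j\<in>I. (c j)^2)"
proof -
  have "norm (\<Sum>j\<in>I. c j *\<^sub>R e j)^2 = (\<Sum>j\<in>I. c j *\<^sub>R e j) \<bullet> (\<Sum>j\<in>I. c j *\<^sub>R e j)"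
    by (simp add: power2_norm_eq_inner)
  also have "\<dots> = (\<Sum>i\<in>I. c i * ((\<Sum>j\<in>I. c j *\<^sub>R e j) \<bullet> e i))"
    by (simp add: inner_sum_right)
  also have "\<dots> = (\<Sum>i\<in>I. (c i)^2)"
    using onf_comb_inner[OF assms] by (simp add: power2_eq_square)
  finally show ?thesis .
qed

lemma onf_norm_x:
  assumes "finite I" "onf I e" "x \<in> span (e ` I)"
  shows "norm x ^2 = (\<Sum>j\<in>I. (x \<bullet> e j)^2)"
  using onf_norm2[OF assms(1,2), of "\<lambda>j. x \<bullet> e j"] onf_expand[OF assms] by simp

lemma onf_inj: "onf I e \<Longrightarrow> inj_on e I"
  unfolding onf_def inj_on_def
proof (intro ballI impI)
  fix x y assume a: "\<forall>i\<in>I. \<forall>j\<in>I. e i \<bullet> e j = (if i = j then 1 else 0)" "x \<in> I" "y \<in> I" "e x = e y"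
  have 1: "e x \<bullet> e y = (if x = y then 1 else 0)" using a(1,2,3) by blast
  have 2: "e y \<bullet> e y = 1" using a(1,3) by simp
  show "x = y" using 1 2 a(4) by (auto split: if_splits)
qed

lemma onf_indep:
  assumes "onf I e" shows "independent (e ` I)"
proof (rule pairwise_orthogonal_independent)
  show "pairwise orthogonal (e ` I)" using assms unfolding onf_def pairwise_def orthogonal_def by auto
  show "0 \<notin> e ` I" proof
    assume "0 \<in> e ` I"
    then obtain i where "i \<in> I" "e i = 0" by auto
    then show False using assms unfolding onf_def by force
  qed
qed

lemma onf_dim: "finite I \<Longrightarrow> onf I e \<Longrightarrow> dim (span (e ` I)) = card I"
proof -
  assume "finite I" "onf I e"
  then have "dim (span (e ` I)) = card (e ` I)" using onf_indep dim_span dim_span_eq_card_independent by metis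
  then show ?thesis using card_image[OF onf_inj[OF \<open>onf I e\<close>]] by simp
qed

lemma onf_outside:
  assumes "finite I" "onf J e" "I \<subseteq> J" "x \<in> span (e ` I)" "j \<in> J - I"
  shows "x \<bullet> e j = 0"
proof -
  have eq: "x = (\<Sum>i\<in>I. (x \<bullet> e i) *\<^sub>R e i)" using onf_expand[OF assms(1) onf_subset[OF assms(2,3)] assms(4)] .
  have "x \<bullet> e j = (\<Sum>i\<in>I. (x \<bullet> e i) *\<^sub>R e i) \<bullet> e j" using eq by (rule arg_cong)
  also have "\<dots> = (\<Sum>i\<in>I. (x \<bullet> e i) * (e i \<bullet> e j))" by (simp add: inner_sum_left)
  finally have "x \<bullet> e j = (\<Sum>i\<in>I. (x \<bullet> e i) * (e i \<bullet> e j))" .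
  also have "\<dots> = 0"
  proof (rule sum.neutral, rule ballI)
    fix i assume i: "i \<in> I"
    then have "i \<noteq> j" "i \<in> J" "j \<in> J" using assms(3,5) by auto
    then have "e i \<bullet> e j = 0" using assms(2) unfolding onf_def by simp
    then show "(x \<bullet> e i) * (e i \<bullet> e j) = 0" by simp
  qed
  finally show ?thesis .
qed

lemma orthonormal_fam_onf: "orthonormal_fam n w = onf {1..n} w"
  unfolding orthonormal_fam_def onf_def ..

lemma mat_scale_mv: "(c *\<^sub>R mat 1 - A) *v x = c *\<^sub>R x - A *v (x::real^'n)"
proof -
  have "(c *\<^sub>R mat 1) *v x = c *\<^sub>R x"
    by (simp add: vec_eq_iff matrix_vector_mult_def mat_def if_distrib if_distribR sum.delta' cong: if_cong)
  then show ?thesis by (simp add: matrix_vector_mult_diff_rdistrib)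
qed

lemma sym_shift: "symmetric_mat A \<Longrightarrow> symmetric_mat (c *\<^sub>R mat 1 - (A::real^'n^'n))"
  unfolding symmetric_mat_def by (simp add: transpose_def mat_def vec_eq_iff)

lemma spectral_sub:
  fixes A :: "real^'n^'n"
  assumes symA: "symmetric_mat A"
  shows "subspace S \<Longrightarrow> (\<forall>x\<in>S. A *v x \<in> S) \<Longrightarrow> dim S = m \<Longrightarrow>
    \<exists>e \<mu>. (\<forall>j<m. e j \<in> S \<and> A *v e j = \<mu> j *\<^sub>R e j) \<and> onf {..<m} e"
proof (induction m arbitrary: S)
  case 0
  show ?case unfolding onf_def by auto
next
  case (Suc m)
  note sub = Suc.prems(1) and inv = Suc.prems(2) and dimS = Suc.prems(3)
  have "\<not> S \<subseteq> {0}" using dimS dim_eq_0[of S] by simp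
  then obtain x0 where x0: "x0 \<in> S" "x0 \<noteq> 0" by blast
  define K where "K = S \<inter> sphere 0 1"
  have cK: "compact K" unfolding K_def by (intro closed_Int_compact closed_subspace compact_sphere sub)
  have nK: "K \<noteq> {}"
  proof -
    have "x0 /\<^sub>R norm x0 \<in> K" unfolding K_def using x0 sub by (simp add: subspace_scale)
    then show ?thesis by blast
  qed
  define f where "f x = x \<bullet> (A *v x)" for x
  have cf: "continuous_on K f" unfolding f_def
    by (intro continuous_intros matrix_vector_mult_linear_continuous_on[unfolded linear_continuous_on])
  obtain h0 where h0K: "h0 \<in> K" and h0max: "\<forall>y\<in>K. f y \<le> f h0"
    using continuous_attains_sup[OF cK nK cf] by blast
  have h0S: "h0 \<in> S" and h0n: "norm h0 = 1" using h0K unfolding K_def by auto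
  define c where "c = f h0"
  have bnd: "f x \<le> c * (norm x)^2" if xS: "x \<in> S" for x
  proof (cases "x = 0")
    case True then show ?thesis by (simp add: f_def)
  next
    case False
    have "x /\<^sub>R norm x \<in> K" unfolding K_def using xS False sub by (simp add: subspace_scale)
    then have "f (x /\<^sub>R norm x) \<le> c" using h0max c_def by blast
    moreover have "f (x /\<^sub>R norm x) = f x / (norm x)^2"
      unfolding f_def by (simp add: matrix_vector_mult_scaleR power2_eq_square field_simps)
    ultimately have "f x / (norm x)^2 \<le> c" by simp
    then show ?thesis using False by (simp add: field_simps)
  qed
  define B where "B = c *\<^sub>R mat 1 - A"
  have symB: "symmetric_mat B" unfolding B_def by (rule sym_shift[OF symA])
  have Bv: "B *v v = c *\<^sub>R v - A *v v" for v unfolding B_def by (rule mat_scale_mv)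
  have orthB: "y \<bullet> (B *v h0) = 0" if yS: "y \<in> S" for y
  proof -
    have "\<And>t. 0 \<le> (h0 + t *\<^sub>R y) \<bullet> (B *v (h0 + t *\<^sub>R y))"
    proof -
      fix t
      have "h0 + t *\<^sub>R y \<in> S" using sub h0S yS by (simp add: subspace_add subspace_scale)
      then have "f (h0 + t *\<^sub>R y) \<le> c * (norm (h0 + t *\<^sub>R y))^2" by (rule bnd)
      then show "0 \<le> (h0 + t *\<^sub>R y) \<bullet> (B *v (h0 + t *\<^sub>R y))"
        unfolding Bv f_def by (simp add: inner_diff_right power2_norm_eq_inner)
    qed
    from sym_CS[OF symB this]
    have "(y \<bullet> (B *v h0))^2 \<le> (h0 \<bullet> (B *v h0)) * (y \<bullet> (B *v y))" .
    moreover have "h0 \<bullet> (B *v h0) = 0"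
      unfolding Bv using h0n by (simp add: inner_diff_right c_def f_def power2_norm_eq_inner[symmetric])
    ultimately show ?thesis by simp
  qed
  have "B *v h0 \<in> S" unfolding Bv using sub inv h0S by (simp add: subspace_diff subspace_scale)
  then have "(B *v h0) \<bullet> (B *v h0) = 0" by (rule orthB)
  then have eig: "A *v h0 = c *\<^sub>R h0" unfolding Bv by simp
  define S' where "S' = {x \<in> S. x \<bullet> h0 = 0}"
  have subS': "subspace S'" unfolding S'_def subspace_def using sub
    by (auto simp: subspace_add subspace_scale subspace_0 inner_add_left)
  have invS': "\<forall>x\<in>S'. A *v x \<in> S'"
  proof
    fix x assume x: "x \<in> S'"
    have "(A *v x) \<bullet> h0 = x \<bullet> (A *v h0)"
      using sym_form[OF symA, of x h0] by (simp add: inner_commute)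
    also have "\<dots> = 0" using x eig unfolding S'_def by simp
    finally show "A *v x \<in> S'" using x inv unfolding S'_def by auto
  qed
  have sumS: "{x + y |x y. x \<in> S' \<and> y \<in> span {h0}} = S"
  proof
    show "{x + y |x y. x \<in> S' \<and> y \<in> span {h0}} \<subseteq> S"
      using sub h0S unfolding S'_def span_singleton by (auto simp: subspace_add subspace_scale)
  next
    show "S \<subseteq> {x + y |x y. x \<in> S' \<and> y \<in> span {h0}}"
    proof
      fix x assume xS: "x \<in> S"
      let ?a = "x - (x \<bullet> h0) *\<^sub>R h0"
      have "?a \<in> S'" unfolding S'_def using xS sub h0S h0n
        by (simp add: subspace_diff subspace_scale inner_diff_left power2_norm_eq_inner[symmetric])
      moreover have "(x \<bullet> h0) *\<^sub>R h0 \<in> span {h0}" unfolding span_singleton by auto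
      ultimately show "x \<in> {x + y |x y. x \<in> S' \<and> y \<in> span {h0}}" by force
    qed
  qed
  have intS: "S' \<inter> span {h0} = {0}"
  proof
    show "S' \<inter> span {h0} \<subseteq> {0}"
    proof
      fix y assume "y \<in> S' \<inter> span {h0}"
      then obtain t where "y = t *\<^sub>R h0" "y \<bullet> h0 = 0" unfolding S'_def span_singleton by auto
      then have "t = 0" using h0n by (simp add: power2_norm_eq_inner[symmetric])
      then show "y \<in> {0}" using \<open>y = t *\<^sub>R h0\<close> by simp
    qed
    show "{0} \<subseteq> S' \<inter> span {h0}" using subS' by (simp add: subspace_0 span_zero)
  qed
  have h00: "h0 \<noteq> 0" using h0n by auto
  have "dim S + dim {0::real^'n} = dim S' + dim (span {h0})"
    using dim_sums_Int[OF subS' subspace_span[of "{h0}"]] unfolding sumS intS .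
  then have dimS': "dim S' = m" using dimS h00 by (simp add: dim_span dim_singleton)
  obtain e \<mu> where e: "\<forall>j<m. e j \<in> S' \<and> A *v e j = \<mu> j *\<^sub>R e j" and eo: "onf {..<m} e"
    using Suc.IH[OF subS' invS' dimS'] by blast
  define e2 where "e2 = e(m := h0)"
  define \<mu>2 where "\<mu>2 = \<mu>(m := c)"
  have F1: "\<forall>j<Suc m. e2 j \<in> S \<and> A *v e2 j = \<mu>2 j *\<^sub>R e2 j"
    using e eig h0S unfolding e2_def \<mu>2_def S'_def by (auto simp: less_Suc_eq)
  have F2: "onf {..<Suc m} e2"
    unfolding onf_def
  proof (intro ballI)
    fix i j assume i: "i \<in> {..<Suc m}" and j: "j \<in> {..<Suc m}"
    show "e2 i \<bullet> e2 j = (if i = j then 1 else 0)"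
    proof (cases "i = m"; cases "j = m")
      assume "i = m" "j = m" then show ?thesis using h0n unfolding e2_def by (simp add: power2_norm_eq_inner[symmetric])
    next
      assume "i = m" "j \<noteq> m" then have "j < m" using j by auto
      then have "e j \<bullet> h0 = 0" using e unfolding S'_def by auto
      then show ?thesis using \<open>i = m\<close> \<open>j \<noteq> m\<close> unfolding e2_def by (simp add: inner_commute)
    next
      assume "i \<noteq> m" "j = m" then have "i < m" using i by auto
      then have "e i \<bullet> h0 = 0" using e unfolding S'_def by auto
      then show ?thesis using \<open>i \<noteq> m\<close> \<open>j = m\<close> unfolding e2_def by simp
    next
      assume "i \<noteq> m" "j \<noteq> m" then have "i < m" "j < m" using i j by auto
      then show ?thesis using eo \<open>i \<noteq> m\<close> \<open>j \<noteq> m\<close> unfolding e2_def onf_def by auto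
    qed
  qed
  show ?case by (rule exI[of _ e2], rule exI[of _ \<mu>2]) (use F1 F2 in simp)
qed

lemma spectral:
  fixes A :: "real^'n^'n"
  assumes "symmetric_mat A"
  obtains e \<mu> where "\<forall>j<CARD('n). A *v e j = \<mu> j *\<^sub>R e j" "onf {..<CARD('n)} e"
  using spectral_sub[OF assms subspace_UNIV, of "CARD('n)"] by auto

lemma onf_full_span:
  fixes e :: "nat \<Rightarrow> real^'n"
  assumes "onf {..<CARD('n)} e"
  shows "x \<in> span (e ` {..<CARD('n)})"
proof -
  have "UNIV \<subseteq> span (e ` {..<CARD('n)})"
  proof (rule card_ge_dim_independent)
    show "independent (e ` {..<CARD('n)})" by (rule onf_indep[OF assms])
    show "dim (UNIV::(real^'n) set) \<le> card (e ` {..<CARD('n)})"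
      using card_image[OF onf_inj[OF assms]] by simp
  qed auto
  then show ?thesis by auto
qed

lemma eig_form:
  fixes A :: "real^'n^'n"
  assumes "finite J" "onf J e" "\<forall>j\<in>J. A *v e j = \<mu> j *\<^sub>R e j" "x \<in> span (e ` J)"
  shows "x \<bullet> (A *v x) = (\<Sum>j\<in>J. \<mu> j * (x \<bullet> e j)^2)"
proof -
  have "A *v x = A *v (\<Sum>j\<in>J. (x \<bullet> e j) *\<^sub>R e j)" using onf_expand[OF assms(1,2,4)] by simp
  also have "\<dots> = (\<Sum>j\<in>J. (x \<bullet> e j) *\<^sub>R (A *v e j))"
    by (simp add: linear_sum[OF matrix_vector_mul_linear] matrix_vector_mult_scaleR)
  also have "\<dots> = (\<Sum>j\<in>J. ((x \<bullet> e j) * \<mu> j) *\<^sub>R e j)"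
    using assms(3) by (intro sum.cong) auto
  finally have "x \<bullet> (A *v x) = (\<Sum>j\<in>J. ((x \<bullet> e j) * \<mu> j) * (x \<bullet> e j))"
    by (simp add: inner_sum_right)
  then show ?thesis by (simp add: power2_eq_square mult_ac)
qed

lemma rayleigh_le_max:
  fixes A :: "real^'n^'n"
  assumes symA: "symmetric_mat A" and h: "norm h = 1"
  shows "h \<bullet> (A *v h) \<le> largest_eigenvalue A"
proof -
  obtain e \<mu> where eig: "\<forall>j<CARD('n). A *v e j = \<mu> j *\<^sub>R e j" and eo: "onf {..<CARD('n)} e"
    using spectral[OF symA] by blast
  let ?N = "{..<CARD('n)}"
  have sub: "{c. is_eigenvalue A c} \<subseteq> \<mu> ` ?N"
  proof
    fix c assume "c \<in> {c. is_eigenvalue A c}"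
    then obtain w where w: "w \<noteq> 0" "A *v w = c *\<^sub>R w" unfolding is_eigenvalue_def by auto
    have wexp: "w = (\<Sum>j\<in>?N. (w \<bullet> e j) *\<^sub>R e j)" using onf_expand[OF _ eo onf_full_span[OF eo]] by simp
    obtain j where j: "j \<in> ?N" "w \<bullet> e j \<noteq> 0"
    proof (rule ccontr)
      assume "\<not> thesis"
      then have "\<forall>j\<in>?N. w \<bullet> e j = 0" using that by blast
      then have "w = 0" using wexp by simp
      then show False using w by simp
    qed
    have "c * (w \<bullet> e j) = (A *v w) \<bullet> e j" using w by simp
    also have "\<dots> = w \<bullet> (A *v e j)" using sym_form[OF symA, of "e j" w] by (simp add: inner_commute)
    also have "\<dots> = \<mu> j * (w \<bullet> e j)" using eig j by simp
    finally have "c = \<mu> j" using j by simp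
    then show "c \<in> \<mu> ` ?N" using j by blast
  qed
  have fin: "finite {c. is_eigenvalue A c}" using finite_subset[OF sub] by blast
  have muin: "\<mu> j \<le> largest_eigenvalue A" if "j \<in> ?N" for j
  proof -
    have "e j \<noteq> 0" using eo that unfolding onf_def by force
    then have "is_eigenvalue A (\<mu> j)" unfolding is_eigenvalue_def using eig that by auto
    then show ?thesis unfolding largest_eigenvalue_def using fin by (simp add: Max_ge)
  qed
  have "h \<bullet> (A *v h) = (\<Sum>j\<in>?N. \<mu> j * (h \<bullet> e j)^2)"
    using eig_form[OF _ eo _ onf_full_span[OF eo]] eig by simp
  also have "\<dots> \<le> (\<Sum>j\<in>?N. largest_eigenvalue A * (h \<bullet> e j)^2)"
    using muin by (intro sum_mono mult_right_mono) auto
  also have "\<dots> = largest_eigenvalue A * (norm h)^2"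
    using onf_norm_x[OF _ eo onf_full_span[OF eo]] by (simp add: sum_distrib_left)
  finally show ?thesis using h by simp
qed

lemma transpose_outer_sum:
  "transpose (\<Sum>i\<in>I. c i *\<^sub>R outer (u i) (v i)) *v (h::real^'n) = (\<Sum>i\<in>I. (c i * (u i \<bullet> h)) *\<^sub>R (v i :: real^'n))"
proof -
  have "(transpose (\<Sum>i\<in>I. c i *\<^sub>R outer (u i) (v i)) *v h) $ j = (\<Sum>i\<in>I. (c i * (u i \<bullet> h)) *\<^sub>R v i) $ j" for j
  proof -
    have "(transpose (\<Sum>i\<in>I. c i *\<^sub>R outer (u i) (v i)) *v h) $ j
        = (\<Sum>l\<in>UNIV. (\<Sum>i\<in>I. c i * (u i $ l * v i $ j)) * h $ l)"
      by (simp add: matrix_vector_mult_def transpose_def outer_def sum_component)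
    also have "\<dots> = (\<Sum>i\<in>I. (\<Sum>l\<in>UNIV. c i * (u i $ l * v i $ j) * h $ l))"
      by (simp add: sum_distrib_right sum.swap[of _ UNIV I])
    also have "\<dots> = (\<Sum>i\<in>I. c i * (\<Sum>l\<in>UNIV. u i $ l * h $ l) * v i $ j)"
      by (simp add: sum_distrib_left sum_distrib_right mult_ac)
    also have "\<dots> = (\<Sum>i\<in>I. (c i * (u i \<bullet> h)) *\<^sub>R v i) $ j"
      by (simp add: sum_component inner_vec_def)
    finally show ?thesis .
  qed
  then show ?thesis by (simp add: vec_eq_iff)
qed

lemma part2_vec:
  fixes u v :: "nat \<Rightarrow> real^'n" and lam :: "nat \<Rightarrow> real"
  assumes uo: "onf {1..n} u" and vo: "onf {1..n} v"
    and Mk: "Mk = (\<Sum>i=1..n. exp (lam i * K) *\<^sub>R outer (u i) (v i))"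
    and mono: "\<And>i j. i \<in> {1..n} \<Longrightarrow> j \<in> {1..n} \<Longrightarrow> i \<le> j \<Longrightarrow> lam j \<le> lam i"
    and K: "K \<ge> 0" and s: "s \<in> {1..n}" and h: "h \<in> span (u ` {n - s + 1..n})"
  shows "transpose Mk *v h \<in> span (v ` {n - s + 1..n}) \<and>
         norm (transpose Mk *v h)^2 \<le> exp (2 * lam (n - s + 1) * K) * (norm h)^2"
proof -
  let ?S = "{n - s + 1..n}"
  have SI: "?S \<subseteq> {1..n}" by auto
  have w1: "transpose Mk *v h = (\<Sum>i=1..n. (exp (lam i * K) * (u i \<bullet> h)) *\<^sub>R v i)"
    unfolding Mk by (rule transpose_outer_sum)
  also have "\<dots> = (\<Sum>i\<in>?S. (exp (lam i * K) * (u i \<bullet> h)) *\<^sub>R v i)"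
  proof (rule sum.mono_neutral_right)
    show "finite {1..n}" by simp
    show "?S \<subseteq> {1..n}" using SI .
    show "\<forall>i\<in>{1..n} - ?S. (exp (lam i * K) * (u i \<bullet> h)) *\<^sub>R v i = 0"
    proof
      fix i assume i: "i \<in> {1..n} - ?S"
      have "h \<bullet> u i = 0" by (rule onf_outside[OF _ uo SI h i]) simp
      then show "(exp (lam i * K) * (u i \<bullet> h)) *\<^sub>R v i = 0" by (simp add: inner_commute)
    qed
  qed
  finally have w: "transpose Mk *v h = (\<Sum>i\<in>?S. (exp (lam i * K) * (u i \<bullet> h)) *\<^sub>R v i)" .
  have inspan: "transpose Mk *v h \<in> span (v ` ?S)"
    unfolding w by (intro span_sum span_mul span_base) auto
  have voS: "onf ?S v" using onf_subset[OF vo SI] .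
  have uoS: "onf ?S u" using onf_subset[OF uo SI] .
  have "norm (transpose Mk *v h)^2 = (\<Sum>i\<in>?S. (exp (lam i * K) * (u i \<bullet> h))^2)"
    unfolding w by (rule onf_norm2[OF _ voS]) simp
  also have "\<dots> \<le> (\<Sum>i\<in>?S. exp (2 * lam (n - s + 1) * K) * (h \<bullet> u i)^2)"
  proof (rule sum_mono)
    fix i assume i: "i \<in> ?S"
    have "lam i \<le> lam (n - s + 1)" using mono[of "n - s + 1" i] i s by auto
    then have "lam i * K \<le> lam (n - s + 1) * K" using K by (rule mult_right_mono)
    then have "exp (lam i * K)^2 \<le> exp (2 * lam (n - s + 1) * K)"
    proof -
      have "exp (lam i * K)^2 = exp (2 * (lam i * K))" by (simp add: power2_eq_square exp_add[symmetric])
      also have "\<dots> \<le> exp (2 * lam (n - s + 1) * K)" using \<open>lam i * K \<le> lam (n - s + 1) * K\<close> by simp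
      finally show ?thesis .
    qed
    then show "(exp (lam i * K) * (u i \<bullet> h))^2 \<le> exp (2 * lam (n - s + 1) * K) * (h \<bullet> u i)^2"
      by (simp add: power_mult_distrib inner_commute mult_right_mono)
  qed
  also have "\<dots> = exp (2 * lam (n - s + 1) * K) * (norm h)^2"
    using onf_norm_x[OF _ uoS h] by (simp add: sum_distrib_left)
  finally show ?thesis using inspan by blast
qed



lemma poly_entry: "poly ((if i = j then [:0, 1:] else 0) - [:a:]) c = (if i = j then c else 0) - (a::real)"
  by simp

lemma poly_charpoly:
  "poly (charpoly A) c = det (\<chi> i j. (if i = j then c else 0) - (A::real^'n^'n) $ i $ j)"
  unfolding charpoly_def det_def by (simp only: poly_sum poly_mult poly_of_int poly_prod poly_entry vec_lambda_beta)

lemma sum_if_delta_vec: "(\<Sum>k\<in>UNIV. (if i = k then c else 0) * (x::real^'n) $ k) = c * x $ i"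
proof -
  have "(\<Sum>k\<in>UNIV. (if i = k then c else 0) * x $ k) = (\<Sum>k\<in>UNIV. if i = k then c * x $ k else 0)"
    by (rule sum.cong) auto
  then show ?thesis by simp
qed

lemma charpoly_eig:
  fixes A :: "real^'n^'n"
  assumes eig: "\<forall>j<CARD('n). A *v e j = \<mu> j *\<^sub>R e j" and eo: "onf {..<CARD('n)} e"
  shows "charpoly A = (\<Prod>j<CARD('n). [:- \<mu> j, 1:])"
proof -
  let ?N = "{..<CARD('n)}"
  obtain g where g: "bij_betw g (UNIV::'n set) ?N"
    using finite_same_card_bij[of "UNIV::'n set" ?N] by auto
  define Q :: "real^'n^'n" where "Q = (\<chi> i j. e (g j) $ i)"
  have gN: "g j \<in> ?N" for j using g by (auto simp: bij_betw_def)
  have ginj: "g i = g j \<longleftrightarrow> i = j" for i j using g by (auto simp: bij_betw_def inj_on_def)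
  have QTQ: "transpose Q ** Q = mat 1"
  proof -
    have "(transpose Q ** Q) $ i $ j = (if i = j then 1 else 0)" for i j
    proof -
      have "(transpose Q ** Q) $ i $ j = e (g i) \<bullet> e (g j)"
        by (simp add: matrix_matrix_mult_def transpose_def Q_def inner_vec_def)
      also have "\<dots> = (if i = j then 1 else 0)" using eo gN ginj unfolding onf_def by simp
      finally show ?thesis .
    qed
    then show ?thesis by (simp add: vec_eq_iff mat_def)
  qed
  have dQ: "det Q \<noteq> 0"
  proof
    assume "det Q = 0"
    then have "det (transpose Q ** Q) = 0" by (simp add: det_mul)
    then show False using QTQ by simp
  qed
  have "poly (charpoly A) c = poly (\<Prod>j\<in>?N. [:- \<mu> j, 1:]) c" for c
  proof -
    define C :: "real^'n^'n" where "C = (\<chi> i j. (if i = j then c else 0) - A $ i $ j)"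
    define D :: "real^'n^'n" where "D = (\<chi> i j. if i = j then c - \<mu> (g j) else 0)"
    have CQ: "C ** Q = Q ** D"
    proof -
      have "(C ** Q) $ i $ j = (Q ** D) $ i $ j" for i j
      proof -
        have "(C ** Q) $ i $ j = (C *v e (g j)) $ i"
          by (simp add: matrix_matrix_mult_def matrix_vector_mult_def Q_def)
        also have "\<dots> = c * e (g j) $ i - (A *v e (g j)) $ i"
          by (simp add: matrix_vector_mult_def C_def left_diff_distrib sum_subtractf sum_if_delta_vec)
        also have "\<dots> = (c - \<mu> (g j)) * e (g j) $ i" using eig gN by (simp add: algebra_simps)
        also have "\<dots> = (Q ** D) $ i $ j"
          by (simp add: matrix_matrix_mult_def D_def Q_def if_distrib if_distribR mult.commute cong: if_cong)
        finally show ?thesis .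
      qed
      then show ?thesis by (simp add: vec_eq_iff)
    qed
    have "det C * det Q = det Q * det D" using arg_cong[OF CQ, of det] by (simp add: det_mul)
    then have "det C = det D" using dQ by simp
    also have "\<dots> = (\<Prod>j\<in>UNIV. c - \<mu> (g j))" by (subst det_diagonal) (auto simp: D_def)
    also have "\<dots> = (\<Prod>j\<in>?N. c - \<mu> j)" by (rule prod.reindex_bij_betw[OF g])
    finally show ?thesis by (simp add: poly_charpoly C_def poly_prod)
  qed
  then show ?thesis using poly_eq_poly_eq_iff by blast
qed

lemma order_prod_lin:
  fixes x :: "nat \<Rightarrow> real"
  assumes "finite I"
  shows "order t (\<Prod>j\<in>I. [:- x j, 1:]) = card {j\<in>I. x j = t}"
  using assms
proof (induction I rule: finite_induct)
  case empty
  then show ?case by (simp add: order_0I)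
next
  case (insert a I)
  have nz: "(\<Prod>j\<in>I. [:- x j, 1:]) \<noteq> 0" by (simp add: prod_zero_iff insert.hyps(1))
  have ol: "order t [:- x a, 1:] = (if x a = t then 1 else 0)"
  proof (cases "x a = t")
    case True then show ?thesis using order_power_n_n[of t 1] by simp
  next
    case False then show ?thesis by (simp add: order_0I)
  qed
  have "order t (\<Prod>j\<in>insert a I. [:- x j, 1:]) = order t ([:- x a, 1:] * (\<Prod>j\<in>I. [:- x j, 1:]))"
    using insert.hyps by simp
  also have "\<dots> = order t [:- x a, 1:] + order t (\<Prod>j\<in>I. [:- x j, 1:])"
  proof (rule order_mult)
    have "[:- x a, 1:] \<noteq> 0" by simp
    then show "[:- x a, 1:] * (\<Prod>j\<in>I. [:- x j, 1:]) \<noteq> 0" using nz by (simp only: mult_eq_0_iff de_Morgan_disj) simp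
  qed
  also have "\<dots> = card {j\<in>insert a I. x j = t}"
  proof (cases "x a = t")
    case True
    then have "{j\<in>insert a I. x j = t} = insert a {j\<in>I. x j = t}" by auto
    then show ?thesis using True ol insert by simp
  next
    case False
    then have "{j\<in>insert a I. x j = t} = {j\<in>I. x j = t}" by auto
    then show ?thesis using False ol insert by simp
  qed
  finally show ?case .
qed

lemma card_filter_eq:
  fixes x y :: "nat \<Rightarrow> real"
  assumes fI: "finite I" and fJ: "finite J" and eq: "\<And>t. card {j\<in>I. x j = t} = card {j\<in>J. y j = t}"
  shows "card {j\<in>I. P (x j)} = card {j\<in>J. P (y j)}"
proof -
  let ?T = "x ` I \<union> y ` J"
  have fT: "finite ?T" using fI fJ by simp
  have "card {j\<in>I. P (x j)} = (\<Sum>j\<in>I. if P (x j) then 1 else 0)"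
    unfolding card_eq_sum by (rule sum.inter_filter[OF fI])
  also have "\<dots> = (\<Sum>t\<in>?T. \<Sum>j\<in>{j\<in>I. x j = t}. if P (x j) then 1 else 0)"
    by (rule sum.group[symmetric]) (use fI fT in auto)
  also have "\<dots> = (\<Sum>t\<in>?T. if P t then card {j\<in>I. x j = t} else 0)"
    by (intro sum.cong refl) (auto intro: sum.cong)
  also have "\<dots> = (\<Sum>t\<in>?T. if P t then card {j\<in>J. y j = t} else 0)"
    by (intro sum.cong refl) (simp only: eq)
  also have "\<dots> = (\<Sum>t\<in>?T. \<Sum>j\<in>{j\<in>J. y j = t}. if P (y j) then 1 else 0)"
    by (intro sum.cong refl) (auto intro: sum.cong)
  also have "\<dots> = (\<Sum>j\<in>J. if P (y j) then 1 else 0)"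
    by (rule sum.group) (use fJ fT in auto)
  also have "\<dots> = card {j\<in>J. P (y j)}"
    unfolding card_eq_sum by (rule sum.inter_filter[OF fJ, symmetric])
  finally show ?thesis .
qed



lemma courant:
  fixes A :: "real^'n^'n" and \<sigma> :: "nat \<Rightarrow> real"
  assumes symA: "symmetric_mat A" and nN: "n = CARD('n)"
    and cp: "charpoly A = (\<Prod>i=1..n. [:- \<sigma> i, 1:])"
    and dec: "\<forall>i\<in>{1..n}. \<forall>j\<in>{1..n}. i \<le> j \<longrightarrow> \<sigma> j \<le> \<sigma> i"
    and i: "i \<in> {1..n}" and W: "subspace W" and dW: "dim W \<ge> n - i + 1"
  shows "\<exists>h\<in>W. norm h = 1 \<and> \<sigma> i \<le> h \<bullet> (A *v h)"
proof -
  obtain e \<mu> where eig: "\<forall>j<CARD('n). A *v e j = \<mu> j *\<^sub>R e j" and eo: "onf {..<CARD('n)} e"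
    using spectral[OF symA] by blast
  let ?N = "{..<CARD('n)}"
  have cpe: "charpoly A = (\<Prod>j\<in>?N. [:- \<mu> j, 1:])" by (rule charpoly_eig[OF eig eo])
  have cnt: "card {j\<in>{1..n}. \<sigma> j = t} = card {j\<in>?N. \<mu> j = t}" for t
    using order_prod_lin[of "{1..n}" t \<sigma>] order_prod_lin[of ?N t \<mu>] cp cpe by simp
  define J where "J = {j\<in>?N. \<sigma> i \<le> \<mu> j}"
  have "card {j\<in>{1..n}. \<sigma> i \<le> \<sigma> j} = card J"
    unfolding J_def by (rule card_filter_eq[OF _ _ cnt]) auto
  moreover have "{1..i} \<subseteq> {j\<in>{1..n}. \<sigma> i \<le> \<sigma> j}" using dec i by auto
  then have "i \<le> card {j\<in>{1..n}. \<sigma> i \<le> \<sigma> j}"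
    using card_mono[of "{j\<in>{1..n}. \<sigma> i \<le> \<sigma> j}" "{1..i}"] by simp
  ultimately have cJ: "card J \<ge> i" by simp
  have JN: "J \<subseteq> ?N" unfolding J_def by auto
  have fJ: "finite J" using JN finite_subset by blast
  have eJ: "onf J e" using onf_subset[OF eo JN] .
  let ?E = "span (e ` J)"
  have dE: "dim ?E = card J" by (rule onf_dim[OF fJ eJ])
  have "dim {x + y |x y. x \<in> ?E \<and> y \<in> W} + dim (?E \<inter> W) = dim ?E + dim W"
    by (rule dim_sums_Int[OF subspace_span W])
  moreover have "dim {x + y |x y. x \<in> ?E \<and> y \<in> W} \<le> n"
    unfolding nN by (rule dim_subset_UNIV_cart)
  ultimately have "dim (?E \<inter> W) \<ge> 1" using dE cJ dW i by linarith
  then have "dim (?E \<inter> W) \<noteq> 0" by linarith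
  then have "\<not> (?E \<inter> W) \<subseteq> {0}" using dim_eq_0[of "?E \<inter> W"] by simp
  then obtain x where x: "x \<in> ?E" "x \<in> W" "x \<noteq> 0" by blast
  define h where "h = x /\<^sub>R norm x"
  have hE: "h \<in> ?E" unfolding h_def using x by (simp add: span_mul)
  have hW: "h \<in> W" unfolding h_def using x W by (simp add: subspace_scale)
  have hn: "norm h = 1" unfolding h_def using x by simp
  have "h \<bullet> (A *v h) = (\<Sum>j\<in>J. \<mu> j * (h \<bullet> e j)^2)"
  proof (rule eig_form[OF fJ eJ _ hE])
    show "\<forall>j\<in>J. A *v e j = \<mu> j *\<^sub>R e j" using eig JN by auto
  qed
  also have "\<dots> \<ge> (\<Sum>j\<in>J. \<sigma> i * (h \<bullet> e j)^2)"
    unfolding J_def by (intro sum_mono mult_right_mono) auto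
  moreover have "(\<Sum>j\<in>J. \<sigma> i * (h \<bullet> e j)^2) = \<sigma> i"
    using onf_norm_x[OF fJ eJ hE] hn by (simp add: sum_distrib_left[symmetric])
  ultimately show ?thesis using hW hn by auto
qed



lemma mv_norm_bound:
  fixes A :: "real^'n^'m"
  shows "norm (A *v x) \<le> real CARD('m) * real CARD('n) * norm A * norm x"
proof -
  have "\<bar>A $ i $ j\<bar> \<le> norm A" for i j
  proof -
    have "norm (A $ i $ j) \<le> norm (A $ i)" by (rule Finite_Cartesian_Product.norm_nth_le)
    also have "norm (A $ i) \<le> norm A" by (rule Finite_Cartesian_Product.norm_nth_le)
    finally show ?thesis by simp
  qed
  then have "onorm ((*v) A) \<le> real CARD('m) * real CARD('n) * norm A"
    by (rule onorm_le_matrix_component)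
  moreover have "norm (A *v x) \<le> onorm ((*v) A) * norm x"
    by (rule onorm[OF matrix_vector_mul_bounded_linear])
  ultimately show ?thesis by (meson mult_right_mono norm_ge_zero order_trans)
qed

lemma psd_norm_bound:
  fixes A :: "real^'n^'n"
  assumes psd: "pos_semidef A" and C: "\<And>x. norm (A *v x) \<le> C * norm x" and C0: "C \<ge> 0"
  shows "norm (A *v u)^2 \<le> C * (u \<bullet> (A *v u))"
proof -
  let ?y = "A *v u"
  have sym: "symmetric_mat A" using psd unfolding pos_semidef_def by auto
  have yy: "?y \<bullet> (A *v u) = norm ?y ^2" by (simp add: power2_norm_eq_inner)
  have "(?y \<bullet> (A *v u))^2 \<le> (u \<bullet> (A *v u)) * (?y \<bullet> (A *v ?y))" by (rule psd_CS[OF psd])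
  moreover have "?y \<bullet> (A *v ?y) \<le> C * norm ?y ^2"
  proof -
    have "?y \<bullet> (A *v ?y) \<le> norm ?y * norm (A *v ?y)" by (rule Cauchy_Schwarz_ineq2[THEN order_trans[OF abs_ge_self]])
    also have "\<dots> \<le> norm ?y * (C * norm ?y)" using C by (simp add: mult_left_mono)
    finally show ?thesis by (simp add: power2_eq_square mult_ac)
  qed
  moreover have "u \<bullet> (A *v u) \<ge> 0" using psd unfolding pos_semidef_def by auto
  ultimately have "(norm ?y ^2)^2 \<le> (u \<bullet> (A *v u)) * (C * norm ?y ^2)"
    unfolding yy by (meson mult_left_mono order_trans)
  then have *: "norm ?y ^2 * norm ?y ^2 \<le> (C * (u \<bullet> (A *v u))) * norm ?y ^2"
    by (simp add: power2_eq_square mult_ac)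
  show ?thesis
  proof (cases "norm ?y = 0")
    case True then show ?thesis using C0 \<open>u \<bullet> (A *v u) \<ge> 0\<close> by simp
  next
    case False
    then have "norm ?y ^2 > 0" by simp
    then show ?thesis using mult_right_le_imp_le[OF *] by blast
  qed
qed

lemma lim_exp_bound:
  fixes f lk :: "nat \<Rightarrow> real"
  assumes lim: "lk \<longlonglongrightarrow> L" and L: "L < 0" and a: "a \<ge> 0"
    and ev: "\<forall>\<^sub>F k in sequentially. 0 \<le> f k \<and> f k \<le> a * exp (2 * lk k * real k)"
  shows "f \<longlonglongrightarrow> 0"
proof (rule tendsto_sandwich[of "\<lambda>_. 0" f sequentially "\<lambda>k. a * exp L ^ k"])
  have ev2: "\<forall>\<^sub>F k in sequentially. lk k < L / 2" using order_tendstoD(2)[OF lim, of "L/2"] L by simp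
  show "\<forall>\<^sub>F k in sequentially. 0 \<le> f k" using ev by (rule eventually_mono) auto
  show "\<forall>\<^sub>F k in sequentially. f k \<le> a * exp L ^ k"
    using eventually_conj[OF ev ev2]
  proof (rule eventually_mono)
    fix k assume k: "(0 \<le> f k \<and> f k \<le> a * exp (2 * lk k * real k)) \<and> lk k < L / 2"
    have "2 * lk k \<le> L" using k by linarith
    then have "(2 * lk k) * real k \<le> L * real k" by (rule mult_right_mono) simp
    then have "exp (2 * lk k * real k) \<le> exp (real k * L)" by (simp add: mult.commute)
    then have "exp (2 * lk k * real k) \<le> exp L ^ k" by (simp add: exp_of_nat_mult)
    then show "f k \<le> a * exp L ^ k" using k a by (meson mult_left_mono order_trans)
  qed
  show "(\<lambda>_. 0) \<longlonglongrightarrow> (0::real)" by simp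
  have "(\<lambda>k. exp L ^ k) \<longlonglongrightarrow> 0" using L by (intro LIMSEQ_power_zero) simp
  then show "(\<lambda>k. a * exp L ^ k) \<longlonglongrightarrow> 0" by (simp add: tendsto_mult_right_zero)
qed



theorem mainTheorem5:
  fixes M :: "nat \<Rightarrow> real^'n^'n"
    and H :: "nat \<Rightarrow> real^'n^'d"
    and R :: "nat \<Rightarrow> real^'d^'d"
    and P :: "nat \<Rightarrow> real^'n^'n"
    and u v :: "nat \<Rightarrow> nat \<Rightarrow> real^'n"
    and lam :: "nat \<Rightarrow> nat \<Rightarrow> real"
    and n :: nat
    and \<alpha> :: "nat \<Rightarrow> real"
  defines "n \<equiv> CARD('n)"
  defines "\<Omega> \<equiv> (\<lambda>k. transpose (H k) ** matrix_inv (R k) ** H k)"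
  defines "\<alpha> \<equiv> (\<lambda>s. Sup {h \<bullet> (P 0 *v h) | h k. k \<ge> 1 \<and>
                    h \<in> span (v k ` {n - s + 1..n}) \<and> norm h = 1})"
  assumes M_inv: "\<And>k. k \<ge> 1 \<Longrightarrow> invertible (M k)"
    and R_pd: "\<And>k. pos_def (R k)"
    and P0_psd: "pos_semidef (P 0)"
    and P_rec: "\<And>k. P (Suc k) = M (Suc k) ** matrix_inv (mat 1 + P k ** \<Omega> k) ** P k
                                      ** transpose (M (Suc k))"
    and u_on: "\<And>k. k \<ge> 1 \<Longrightarrow> orthonormal_fam n (u k)"
    and v_on: "\<And>k. k \<ge> 1 \<Longrightarrow> orthonormal_fam n (v k)"
    and svd: "\<And>k. k \<ge> 1 \<Longrightarrow>
               Mprod M k = (\<Sum>i=1..n. exp (lam k i * real k) *\<^sub>R outer (u k i) (v k i))"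
    and lam_mono: "\<And>k i j. k \<ge> 1 \<Longrightarrow> i \<in> {1..n} \<Longrightarrow> j \<in> {1..n} \<Longrightarrow> i \<le> j
                     \<Longrightarrow> lam k j \<le> lam k i"
  shows
    "(\<forall>s\<in>{1..n}. \<alpha> s \<le> largest_eigenvalue (P 0))
     \<and> (\<forall>k\<ge>1. \<forall>s\<in>{1..n}. \<forall>h. h \<in> span (u k ` {n - s + 1..n}) \<and> norm h = 1 \<longrightarrow>
          h \<bullet> (P k *v h) \<le> \<alpha> s * exp (2 * lam k (n - s + 1) * real k))
     \<and> (\<forall>k\<ge>1. \<forall>\<sigma> :: nat \<Rightarrow> real.
          charpoly (P k) = (\<Prod>i=1..n. [:- \<sigma> i, 1:])
          \<and> (\<forall>i\<in>{1..n}. \<forall>j\<in>{1..n}. i \<le> j \<longrightarrow> \<sigma> j \<le> \<sigma> i) \<longrightarrow>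
          (\<forall>i\<in>{1..n}. \<sigma> i \<le> \<alpha> (n - i + 1) * exp (2 * lam k i * real k)
                       \<and> \<alpha> (n - i + 1) * exp (2 * lam k i * real k)
                           \<le> largest_eigenvalue (P 0) * exp (2 * lam k i * real k)))
     \<and> (\<forall>\<Lambda> :: nat \<Rightarrow> real.
          (\<forall>i\<in>{1..n}. (\<lambda>k. lam k i) \<longlonglongrightarrow> \<Lambda> i)
          \<and> (\<forall>i\<in>{1..n}. \<forall>j\<in>{1..n}. i < j \<longrightarrow> \<Lambda> j < \<Lambda> i) \<longrightarrow>
          (\<forall>i\<in>{1..n}. \<Lambda> i < 0 \<longrightarrow> (\<lambda>k. u k i \<bullet> (P k *v u k i)) \<longlonglongrightarrow> 0)
          \<and> (bounded (range P) \<longrightarrow>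
               (\<forall>i\<in>{1..n}. \<Lambda> i < 0 \<longrightarrow> (\<lambda>k. norm (P k *v u k i)) \<longlonglongrightarrow> 0)))"
proof -
  have nN: "n = CARD('n)" using n_def by simp
  have Wpsd: "\<And>k. pos_semidef (\<Omega> k)" unfolding \<Omega>_def by (rule Omega_psd[OF R_pd])
  have PB: "pos_semidef (P k) \<and> (\<forall>h. h \<bullet> (P k *v h) \<le>
           (transpose (Mprod M k) *v h) \<bullet> (P 0 *v (transpose (Mprod M k) *v h)))" for k
    by (rule P_bound[OF P0_psd Wpsd P_rec])
  have symP: "symmetric_mat (P k)" for k using PB unfolding pos_semidef_def by blast
  have Pnn: "0 \<le> x \<bullet> (P k *v x)" for k x using PB unfolding pos_semidef_def by blast
  define L where "L = largest_eigenvalue (P 0)"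
  have RL: "h \<bullet> (P 0 *v h) \<le> L" if "norm h = 1" for h unfolding L_def by (rule rayleigh_le_max[OF symP that])
  define Set where "Set s = {h \<bullet> (P 0 *v h) | h k. k \<ge> 1 \<and> h \<in> span (v k ` {n - s + 1..n}) \<and> norm h = 1}" for s
  have aS: "\<alpha> s = Sup (Set s)" for s unfolding \<alpha>_def Set_def ..
  have bdd: "bdd_above (Set s)" for s
    by (rule bdd_aboveI[where M=L]) (auto simp: Set_def intro: RL)
  have uon: "onf {1..n} (u k)" if "k \<ge> 1" for k using u_on[OF that] by (simp add: orthonormal_fam_onf)
  have von: "onf {1..n} (v k)" if "k \<ge> 1" for k using v_on[OF that] by (simp add: orthonormal_fam_onf)
  have unorm: "norm (u k i) = 1" if "k \<ge> 1" "i \<in> {1..n}" for k i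
    using uon[OF that(1)] that(2) unfolding onf_def by (simp add: norm_eq_1)
  have vnorm: "norm (v k i) = 1" if "k \<ge> 1" "i \<in> {1..n}" for k i
    using von[OF that(1)] that(2) unfolding onf_def by (simp add: norm_eq_1)
  have ne: "v 1 n \<bullet> (P 0 *v v 1 n) \<in> Set s" if s: "s \<in> {1..n}" for s
  proof -
    have "v 1 n \<in> span (v 1 ` {n - s + 1..n})" using s by (intro span_base imageI) auto
    moreover have "norm (v 1 n) = 1" using vnorm[of 1 n] s by auto
    ultimately show ?thesis unfolding Set_def by blast
  qed
  have aL: "\<alpha> s \<le> L" if s: "s \<in> {1..n}" for s
    unfolding aS by (rule cSup_least) (use ne[OF s] in \<open>auto simp: Set_def intro: RL\<close>)
  have a0: "0 \<le> \<alpha> s" if s: "s \<in> {1..n}" for s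
    unfolding aS using cSup_upper[OF ne[OF s] bdd] Pnn by (meson order_trans)
  have aup: "w \<bullet> (P 0 *v w) \<le> \<alpha> s * norm w ^2"
    if k: "k \<ge> 1" and w: "w \<in> span (v k ` {n - s + 1..n})" for s k w
  proof (cases "w = 0")
    case True then show ?thesis by simp
  next
    case False
    define z where "z = w /\<^sub>R norm w"
    have "z \<in> span (v k ` {n - s + 1..n})" unfolding z_def using w by (simp add: span_mul)
    moreover have "norm z = 1" unfolding z_def using False by simp
    ultimately have "z \<bullet> (P 0 *v z) \<in> Set s" unfolding Set_def using k by blast
    then have "z \<bullet> (P 0 *v z) \<le> \<alpha> s" unfolding aS by (rule cSup_upper[OF _ bdd])
    moreover have "z \<bullet> (P 0 *v z) = (w \<bullet> (P 0 *v w)) / norm w ^2"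
      unfolding z_def by (simp add: matrix_vector_mult_scaleR power2_eq_square field_simps)
    ultimately show ?thesis using False by (simp add: field_simps)
  qed
  have part2: "h \<bullet> (P k *v h) \<le> \<alpha> s * exp (2 * lam k (n - s + 1) * real k)"
    if k: "k \<ge> 1" and s: "s \<in> {1..n}" and h: "h \<in> span (u k ` {n - s + 1..n})" and hn: "norm h = 1"
    for k s h
  proof -
    let ?w = "transpose (Mprod M k) *v h"
    let ?E = "exp (2 * lam k (n - s + 1) * real k)"
    have W: "?w \<in> span (v k ` {n - s + 1..n}) \<and> norm ?w ^2 \<le> ?E * (norm h)^2"
      by (rule part2_vec[OF uon[OF k] von[OF k] svd[OF k] lam_mono[OF k] _ s h]) auto
    have "h \<bullet> (P k *v h) \<le> ?w \<bullet> (P 0 *v ?w)" using PB by blast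
    also have "\<dots> \<le> \<alpha> s * norm ?w ^2" using aup[OF k] W by blast
    also have "\<dots> \<le> \<alpha> s * ?E" using W hn a0[OF s] by (simp add: mult_left_mono)
    finally show ?thesis .
  qed
  have P1: "\<forall>s\<in>{1..n}. \<alpha> s \<le> largest_eigenvalue (P 0)" using aL unfolding L_def by blast
  have P2: "\<forall>k\<ge>1. \<forall>s\<in>{1..n}. \<forall>h. h \<in> span (u k ` {n - s + 1..n}) \<and> norm h = 1 \<longrightarrow>
          h \<bullet> (P k *v h) \<le> \<alpha> s * exp (2 * lam k (n - s + 1) * real k)"
    using part2 by blast
  have P3: "\<forall>k\<ge>1. \<forall>\<sigma> :: nat \<Rightarrow> real.
          charpoly (P k) = (\<Prod>i=1..n. [:- \<sigma> i, 1:])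
          \<and> (\<forall>i\<in>{1..n}. \<forall>j\<in>{1..n}. i \<le> j \<longrightarrow> \<sigma> j \<le> \<sigma> i) \<longrightarrow>
          (\<forall>i\<in>{1..n}. \<sigma> i \<le> \<alpha> (n - i + 1) * exp (2 * lam k i * real k)
                       \<and> \<alpha> (n - i + 1) * exp (2 * lam k i * real k)
                           \<le> largest_eigenvalue (P 0) * exp (2 * lam k i * real k))"
  proof (intro allI impI ballI conjI)
    fix k :: nat and \<sigma> :: "nat \<Rightarrow> real" and i
    assume k: "k \<ge> 1" and H: "charpoly (P k) = (\<Prod>i=1..n. [:- \<sigma> i, 1:])
          \<and> (\<forall>i\<in>{1..n}. \<forall>j\<in>{1..n}. i \<le> j \<longrightarrow> \<sigma> j \<le> \<sigma> i)" and i: "i \<in> {1..n}"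
    have si: "n - i + 1 \<in> {1..n}" and ns: "n - (n - i + 1) + 1 = i" using i by auto
    have iS: "{i..n} \<subseteq> {1..n}" using i by auto
    have dW: "dim (span (u k ` {i..n})) = card {i..n}"
      by (rule onf_dim[OF _ onf_subset[OF uon[OF k] iS]]) simp
    obtain h where hW: "h \<in> span (u k ` {i..n})" and hn: "norm h = 1" and sh: "\<sigma> i \<le> h \<bullet> (P k *v h)"
    proof -
      have "dim (span (u k ` {i..n})) \<ge> n - i + 1" using dW i by (simp add: Suc_diff_le)
      from courant[OF symP nN H[THEN conjunct1] H[THEN conjunct2] i subspace_span[of "u k ` {i..n}"] this]
      show ?thesis using that by blast
    qed
    have "h \<bullet> (P k *v h) \<le> \<alpha> (n - i + 1) * exp (2 * lam k (n - (n - i + 1) + 1) * real k)"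
      by (rule part2[OF k si _ hn]) (use hW ns in simp)
    then show "\<sigma> i \<le> \<alpha> (n - i + 1) * exp (2 * lam k i * real k)" using sh ns by simp
    show "\<alpha> (n - i + 1) * exp (2 * lam k i * real k) \<le> largest_eigenvalue (P 0) * exp (2 * lam k i * real k)"
      using aL[OF si] unfolding L_def by (simp add: mult_right_mono)
  qed
  have P4: "\<forall>\<Lambda> :: nat \<Rightarrow> real.
          (\<forall>i\<in>{1..n}. (\<lambda>k. lam k i) \<longlonglongrightarrow> \<Lambda> i)
          \<and> (\<forall>i\<in>{1..n}. \<forall>j\<in>{1..n}. i < j \<longrightarrow> \<Lambda> j < \<Lambda> i) \<longrightarrow>
          (\<forall>i\<in>{1..n}. \<Lambda> i < 0 \<longrightarrow> (\<lambda>k. u k i \<bullet> (P k *v u k i)) \<longlonglongrightarrow> 0)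
          \<and> (bounded (range P) \<longrightarrow>
               (\<forall>i\<in>{1..n}. \<Lambda> i < 0 \<longrightarrow> (\<lambda>k. norm (P k *v u k i)) \<longlonglongrightarrow> 0))"
  proof (intro allI impI)
    fix \<Lambda> :: "nat \<Rightarrow> real"
    assume H: "(\<forall>i\<in>{1..n}. (\<lambda>k. lam k i) \<longlonglongrightarrow> \<Lambda> i)
          \<and> (\<forall>i\<in>{1..n}. \<forall>j\<in>{1..n}. i < j \<longrightarrow> \<Lambda> j < \<Lambda> i)"
    have F: "(\<lambda>k. u k i \<bullet> (P k *v u k i)) \<longlonglongrightarrow> 0" if i: "i \<in> {1..n}" and Li: "\<Lambda> i < 0" for i
    proof (rule lim_exp_bound[OF _ Li a0])
      show "(\<lambda>k. lam k i) \<longlonglongrightarrow> \<Lambda> i" using H i by blast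
      show "n - i + 1 \<in> {1..n}" using i by auto
      have si: "n - i + 1 \<in> {1..n}" and ns: "n - (n - i + 1) + 1 = i" using i by auto
      show "\<forall>\<^sub>F k in sequentially. 0 \<le> u k i \<bullet> (P k *v u k i) \<and>
             u k i \<bullet> (P k *v u k i) \<le> \<alpha> (n - i + 1) * exp (2 * lam k i * real k)"
        using eventually_ge_at_top[of 1]
      proof (rule eventually_mono)
        fix k :: nat assume k: "1 \<le> k"
        have "u k i \<in> span (u k ` {n - (n - i + 1) + 1..n})" using i ns by (intro span_base imageI) auto
        from part2[OF k si this unorm[OF k i]]
        show "0 \<le> u k i \<bullet> (P k *v u k i) \<and>
             u k i \<bullet> (P k *v u k i) \<le> \<alpha> (n - i + 1) * exp (2 * lam k i * real k)"
          using Pnn ns by simp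
      qed
    qed
    show "(\<forall>i\<in>{1..n}. \<Lambda> i < 0 \<longrightarrow> (\<lambda>k. u k i \<bullet> (P k *v u k i)) \<longlonglongrightarrow> 0)
          \<and> (bounded (range P) \<longrightarrow>
               (\<forall>i\<in>{1..n}. \<Lambda> i < 0 \<longrightarrow> (\<lambda>k. norm (P k *v u k i)) \<longlonglongrightarrow> 0))"
    proof (intro conjI impI ballI)
      fix i assume "i \<in> {1..n}" "\<Lambda> i < 0"
      then show "(\<lambda>k. u k i \<bullet> (P k *v u k i)) \<longlonglongrightarrow> 0" by (rule F)
    next
      fix i assume bP: "bounded (range P)" and i: "i \<in> {1..n}" and Li: "\<Lambda> i < 0"
      obtain B where B: "\<And>k. norm (P k) \<le> B" using bP unfolding bounded_iff by auto
      define C where "C = real CARD('n) * real CARD('n) * B"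
      have B0: "B \<ge> 0" using B[of 0] norm_ge_zero order_trans by blast
      have C0: "C \<ge> 0" unfolding C_def using B0 by simp
      have Cb: "norm (P k *v x) \<le> C * norm x" for k x
      proof -
        have "norm (P k *v x) \<le> real CARD('n) * real CARD('n) * norm (P k) * norm x"
          by (rule mv_norm_bound)
        also have "\<dots> \<le> C * norm x" unfolding C_def using B[of k]
          by (intro mult_right_mono mult_left_mono) auto
        finally show ?thesis .
      qed
      have Fi: "(\<lambda>k. u k i \<bullet> (P k *v u k i)) \<longlonglongrightarrow> 0" by (rule F[OF i Li])
      have "(\<lambda>k. sqrt (C * (u k i \<bullet> (P k *v u k i)))) \<longlonglongrightarrow> sqrt (C * 0)"
        by (intro tendsto_real_sqrt tendsto_mult tendsto_const Fi)
      then have S: "(\<lambda>k. sqrt (C * (u k i \<bullet> (P k *v u k i)))) \<longlonglongrightarrow> 0" by simp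
      show "(\<lambda>k. norm (P k *v u k i)) \<longlonglongrightarrow> 0"
      proof (rule tendsto_sandwich[OF _ _ tendsto_const S])
        show "\<forall>\<^sub>F k in sequentially. 0 \<le> norm (P k *v u k i)" by simp
        show "\<forall>\<^sub>F k in sequentially. norm (P k *v u k i) \<le> sqrt (C * (u k i \<bullet> (P k *v u k i)))"
        proof (rule always_eventually, rule allI)
          fix k
          have "norm (P k *v u k i)^2 \<le> C * (u k i \<bullet> (P k *v u k i))"
            by (rule psd_norm_bound[OF PB[THEN conjunct1] Cb C0])
          then show "norm (P k *v u k i) \<le> sqrt (C * (u k i \<bullet> (P k *v u k i)))"
            by (rule real_le_rsqrt)
        qed
      qed
    qed
  qed
  show ?thesis using P1 P2 P3 P4 by blast
qed


end
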